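(* Let $G=(V,E,w)$ be a connected weighted graph with $n$ vertices and let $e\in E$. Then $$ n\cdot w_e\cdot B_e^{2}=\sum_{\{s,t\}\subseteq V}\frac{f_{st}(e)^{2}}{w_e}, $$ where the sum is over unordered pairs of distinct vertices.
   Context: $G=(V,E,w)$ is an undirected graph with positive edge weights $w_e$. Each edge is given an arbitrary fixed orientation $(s,t)$; the boundary matrix $\partial\in\mathbb{R}^{|V|\times|E|}$ has column $\partial 1_e=1_s-1_t$ for $e=(s,t)$, where $1_x$ is the indicator vector of $x$. $W$ is the diagonal matrix of edge weights and $L=\partial W\partial^{T}$ is the graph Laplacian; $L^{+}$ is its Moore–Penrose pseudoinverse and $L^{2+}=(L^{+})^2$. The $st$-electrical flow is $f_{st}=W\partial^{T}L^{+}(1_s-1_t)\in\mathbb{R}^{E}$. The biharmonic distance is $B_{st}=\sqrt{(1_s-1_t)^{T}L^{2+}(1_s-1_t)}$ and $B_e:=B_{st}$ for $e=\{s,t\}$. *)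

theory Defs
  imports "HOL-Analysis.Analysis"
begin

text \<open>Graphs: vertices are the elements of a finite type 'v, edges the elements of a
finite type 'e; each edge e carries a fixed orientation (src e, tgt e).\<close>

definition indic :: "'v::finite \<Rightarrow> real^'v" where
  "indic x = (\<chi> i. if i = x then 1 else 0)"

definition boundary :: "('e::finite \<Rightarrow> 'v::finite) \<Rightarrow> ('e \<Rightarrow> 'v) \<Rightarrow> real^'e^'v" where
  "boundary src tgt = (\<chi> v e. (if v = src e then 1 else 0) - (if v = tgt e then 1 else 0))"

definition diagm :: "('e::finite \<Rightarrow> real) \<Rightarrow> real^'e^'e" where
  "diagm w = (\<chi> i j. if i = j then w i else 0)"

definition laplacian :: "('e::finite \<Rightarrow> 'v::finite) \<Rightarrow> ('e \<Rightarrow> 'v) \<Rightarrow> ('e \<Rightarrow> real) \<Rightarrow> real^'v^'v" where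
  "laplacian src tgt w = boundary src tgt ** diagm w ** transpose (boundary src tgt)"

definition pinv :: "real^'n::finite^'n \<Rightarrow> real^'n^'n" where
  "pinv A = (THE X. A ** X ** A = A \<and> X ** A ** X = X \<and>
                    transpose (A ** X) = A ** X \<and> transpose (X ** A) = X ** A)"

definition elec_flow :: "('e::finite \<Rightarrow> 'v::finite) \<Rightarrow> ('e \<Rightarrow> 'v) \<Rightarrow> ('e \<Rightarrow> real) \<Rightarrow> 'v \<Rightarrow> 'v \<Rightarrow> real^'e" where
  "elec_flow src tgt w s t =
     (diagm w ** transpose (boundary src tgt) ** pinv (laplacian src tgt w)) *v (indic s - indic t)"

definition biharmonic :: "('e::finite \<Rightarrow> 'v::finite) \<Rightarrow> ('e \<Rightarrow> 'v) \<Rightarrow> ('e \<Rightarrow> real) \<Rightarrow> 'v \<Rightarrow> 'v \<Rightarrow> real" where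
  "biharmonic src tgt w s t =
     sqrt ((indic s - indic t) \<bullet>
       ((pinv (laplacian src tgt w) ** pinv (laplacian src tgt w)) *v (indic s - indic t)))"

definition graph_connected :: "('e \<Rightarrow> 'v) \<Rightarrow> ('e \<Rightarrow> 'v) \<Rightarrow> bool" where
  "graph_connected src tgt \<longleftrightarrow>
     (\<forall>u v. (u, v) \<in> ({(src e, tgt e) | e. True} \<union> {(tgt e, src e) | e. True})\<^sup>*)"

end

theory Submission imports Defs begin

lemma msub_l: "(A::real^'n^'m) ** (B - C) = A ** B - A ** C"
  by (simp add: matrix_matrix_mult_def vec_eq_iff sum_subtractf algebra_simps)
lemma msub_r: "((B::real^'n^'m) - C) ** (A::real^'p^'n) = B ** A - C ** A"
  by (simp add: matrix_matrix_mult_def vec_eq_iff sum_subtractf algebra_simps)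
lemma madd_r: "((B::real^'n^'m) + C) ** (A::real^'p^'n) = B ** A + C ** A"
  by (simp add: matrix_matrix_mult_def vec_eq_iff sum.distrib algebra_simps)
lemma transpose_sub: "transpose ((A::real^'n^'m) - B) = transpose A - transpose B"
  by (simp add: transpose_def vec_eq_iff)

lemma penrose_unique:
  fixes A X Y :: "real^'n::finite^'n"
  assumes X1: "A ** X ** A = A" and X2: "X ** A ** X = X"
    and X3: "transpose (A ** X) = A ** X" and X4: "transpose (X ** A) = X ** A"
    and Y1: "A ** Y ** A = A" and Y2: "Y ** A ** Y = Y"
    and Y3: "transpose (A ** Y) = A ** Y" and Y4: "transpose (Y ** A) = Y ** A"
  shows "Y = X"
proof -
  have "X = X ** (A ** X)" using X2 by (simp add: matrix_mul_assoc)
  also have "\<dots> = X ** transpose (A ** X)" using X3 by simp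
  also have "\<dots> = X ** transpose X ** transpose (A ** Y ** A)" using Y1 by (simp add: matrix_transpose_mul matrix_mul_assoc)
  also have "\<dots> = X ** transpose (A ** X) ** transpose (A ** Y)" by (simp add: matrix_transpose_mul matrix_mul_assoc)
  also have "\<dots> = X ** A ** X ** A ** Y" using X3 Y3 by (simp add: matrix_mul_assoc)
  also have "\<dots> = X ** A ** Y" by (metis X1 matrix_mul_assoc)
  finally have hx: "X = X ** A ** Y" .
  have "Y = (Y ** A) ** Y" using Y2 by (simp add: matrix_mul_assoc)
  also have "\<dots> = transpose (Y ** A) ** Y" using Y4 by simp
  also have "\<dots> = transpose (A ** X ** A) ** transpose Y ** Y" using X1 by (simp add: matrix_transpose_mul matrix_mul_assoc)
  also have "\<dots> = transpose (X ** A) ** transpose (Y ** A) ** Y" by (simp add: matrix_transpose_mul matrix_mul_assoc)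
  also have "\<dots> = X ** A ** Y ** A ** Y" using X4 Y4 by (simp add: matrix_mul_assoc)
  also have "\<dots> = X ** A ** Y" by (metis Y2 matrix_mul_assoc)
  finally show ?thesis using hx by simp
qed

lemma pinv_eq:
  fixes A X :: "real^'n::finite^'n"
  assumes "A ** X ** A = A" "X ** A ** X = X"
    "transpose (A ** X) = A ** X" "transpose (X ** A) = X ** A"
  shows "pinv A = X"
  unfolding pinv_def
  apply (rule the_equality)
  using assms apply blast
  using penrose_unique[OF assms] by blast


definition bd :: "('e \<Rightarrow> 'v) \<Rightarrow> ('e \<Rightarrow> 'v) \<Rightarrow> 'v \<Rightarrow> 'e \<Rightarrow> real" where
  "bd src tgt i a = (if i = src a then 1 else 0) - (if i = tgt a then 1 else 0)"

lemma lap_entry: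
  "laplacian src tgt w $ i $ j = (\<Sum>a\<in>UNIV. w a * bd src tgt i a * bd src tgt j a)"
proof -
  have BD: "(boundary src tgt ** diagm w) $ i $ k = boundary src tgt $ i $ k * w k" for i k
    unfolding matrix_matrix_mult_def diagm_def
    by (simp add: if_distrib[of "(*) _"] sum.delta cong: if_cong)
  show ?thesis
    unfolding laplacian_def matrix_matrix_mult_def[of "boundary src tgt ** diagm w"]
    by (simp add: BD transpose_def) (simp add: boundary_def bd_def mult_ac)
qed

lemma bd_sum: "(\<Sum>i\<in>(UNIV::'v::finite set). bd src tgt i a) = 0"
  unfolding bd_def sum_subtractf by (simp add: sum.delta)

lemma bd_dot: "(\<Sum>i\<in>(UNIV::'v::finite set). bd src tgt i a * x i) = x (src a) - x (tgt a)"
proof -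
  have e: "\<And>P (y::real). (if P then 1 else 0) * y = (if P then y else 0)" by simp
  show ?thesis unfolding bd_def left_diff_distrib sum_subtractf e by (simp add: sum.delta)
qed

lemma lap_rowsum: "(\<Sum>j\<in>UNIV. laplacian src tgt w $ i $ j) = 0"
proof -
  have "(\<Sum>j\<in>UNIV. laplacian src tgt w $ i $ j) = (\<Sum>a\<in>UNIV. w a * bd src tgt i a * (\<Sum>j\<in>UNIV. bd src tgt j a))"
    unfolding lap_entry sum_distrib_left by (subst sum.swap) (simp add: mult.assoc)
  then show ?thesis by (simp add: bd_sum)
qed

lemma lap_sym: "transpose (laplacian src tgt w) = laplacian src tgt w"
  by (simp add: vec_eq_iff transpose_def lap_entry mult_ac)

lemma lap_colsum: "(\<Sum>i\<in>UNIV. laplacian src tgt w $ i $ j) = 0"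
  using lap_rowsum[of src tgt w j] lap_sym[of src tgt w]
  by (metis (no_types, lifting) sum.cong transpose_def vec_lambda_beta) 

lemma lap_quad: "x \<bullet> (laplacian src tgt w *v x) = (\<Sum>a\<in>UNIV. w a * (x$src a - x$tgt a)^2)"
proof -
  have "x \<bullet> (laplacian src tgt w *v x) = (\<Sum>i\<in>UNIV. \<Sum>j\<in>UNIV. \<Sum>a\<in>UNIV. w a * (bd src tgt i a * x$i) * (bd src tgt j a * x$j))"
    by (simp add: inner_vec_def matrix_vector_mult_def lap_entry sum_distrib_left sum_distrib_right mult_ac)
  also have "\<dots> = (\<Sum>a\<in>UNIV. w a * (\<Sum>i\<in>UNIV. bd src tgt i a * x$i) * (\<Sum>j\<in>UNIV. bd src tgt j a * x$j))"
  proof -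
    define F where "F i j a = w a * (bd src tgt i a * x$i) * (bd src tgt j a * x$j)" for i j a
    have "(\<Sum>i\<in>UNIV. \<Sum>j\<in>UNIV. \<Sum>a\<in>UNIV. F i j a) = (\<Sum>i\<in>UNIV. \<Sum>a\<in>UNIV. \<Sum>j\<in>UNIV. F i j a)"
      by (rule sum.cong[OF refl], rule sum.swap)
    also have "\<dots> = (\<Sum>a\<in>UNIV. \<Sum>i\<in>UNIV. \<Sum>j\<in>UNIV. F i j a)" by (rule sum.swap)
    also have "\<dots> = (\<Sum>a\<in>UNIV. w a * (\<Sum>i\<in>UNIV. bd src tgt i a * x$i) * (\<Sum>j\<in>UNIV. bd src tgt j a * x$j))"
      unfolding F_def by (simp add: sum_distrib_left sum_distrib_right mult_ac)
    finally show ?thesis unfolding F_def .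
  qed
  also have "\<dots> = (\<Sum>a\<in>UNIV. w a * (x$src a - x$tgt a)^2)"
    by (simp add: bd_dot[where x="\<lambda>i. x$i"] power2_eq_square mult.assoc)
  finally show ?thesis .
qed


definition Pm :: "real^'v::finite^'v" where "Pm = (\<chi> i j. 1 / real CARD('v))"
definition onev :: "real^'v::finite" where "onev = (\<chi> i. 1)"

lemma card_pos: "real CARD('v::finite) > 0" by simp

lemma Pm_Pm: "Pm ** Pm = (Pm :: real^'v::finite^'v)"
  using card_pos[where 'v='v]
  by (simp add: Pm_def matrix_matrix_mult_def vec_eq_iff power2_eq_square field_simps)

lemma lap_Pm: "laplacian src tgt w ** Pm = 0"
  by (simp add: Pm_def matrix_matrix_mult_def vec_eq_iff sum_divide_distrib[symmetric] lap_rowsum)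

lemma Pm_lap: "Pm ** laplacian src tgt w = 0"
  by (simp add: Pm_def matrix_matrix_mult_def vec_eq_iff sum_divide_distrib[symmetric] lap_colsum)

lemma Pm_sym: "transpose Pm = Pm"
  by (simp add: Pm_def transpose_def vec_eq_iff)

lemma Pm_one: "Pm *v onev = (onev :: real^'v::finite)"
  using card_pos[where 'v='v]
  by (simp add: Pm_def onev_def matrix_vector_mult_def vec_eq_iff)

lemma lap_one: "laplacian src tgt w *v onev = 0"
  by (simp add: onev_def matrix_vector_mult_def vec_eq_iff lap_rowsum)

lemma conn_const:
  assumes conn: "graph_connected src tgt"
    and h: "\<And>a. x (src a) = x (tgt a)"
  shows "x u = x v"
proof -
  have "(u, v) \<in> ({(src e, tgt e) | e. True} \<union> {(tgt e, src e) | e. True})\<^sup>*"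
    using conn unfolding graph_connected_def by blast
  then show ?thesis
  proof (induction rule: rtrancl_induct)
    case base then show ?case by simp
  next
    case (step y z) then show ?case using h by auto
  qed
qed

lemma K_ker:
  fixes src tgt :: "'e::finite \<Rightarrow> 'v::finite"
  assumes pos: "\<And>a. w a > 0" and conn: "graph_connected src tgt"
    and kx: "(laplacian src tgt w + Pm) *v x = 0"
  shows "x = 0"
proof -
  let ?L = "laplacian src tgt w"
  have n0: "real CARD('v) > 0" by simp
  have Pmx: "Pm *v x = (\<chi> i. (\<Sum>j\<in>UNIV. x$j) / real CARD('v))"
    by (simp add: Pm_def matrix_vector_mult_def vec_eq_iff sum_divide_distrib)
  have split: "?L *v x + Pm *v x = 0" using kx
    by (simp only: matrix_vector_mult_add_rdistrib)
  have "onev v* ?L = 0" by (metis lap_sym lap_one transpose_matrix_vector)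
  then have o1: "onev \<bullet> (?L *v x) = 0" by (metis dot_lmul_matrix inner_zero_left)
  have o2: "onev \<bullet> (Pm *v x) = (\<Sum>j\<in>UNIV. x$j)"
    using n0 by (simp add: Pmx onev_def inner_vec_def)
  have "onev \<bullet> (?L *v x + Pm *v x) = 0" using split by simp
  then have sx: "(\<Sum>j\<in>UNIV. x$j) = 0" using o1 o2 by (simp add: inner_add_right)
  then have "Pm *v x = 0" by (simp add: Pmx vec_eq_iff)
  then have lx: "?L *v x = 0" using split by simp
  then have "(\<Sum>a\<in>UNIV. w a * (x$src a - x$tgt a)^2) = 0" using lap_quad[of x src tgt w] by simp
  then have "\<forall>a\<in>UNIV. w a * (x$src a - x$tgt a)^2 = 0"
  proof -
    have nn: "\<And>a. 0 \<le> w a * (x$src a - x$tgt a)^2" using pos by (simp add: less_imp_le)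
    assume "(\<Sum>a\<in>UNIV. w a * (x$src a - x$tgt a)^2) = 0"
    then show ?thesis using sum_nonneg_eq_0_iff[of UNIV "\<lambda>a. w a * (x$src a - x$tgt a)^2"] nn by simp
  qed
  then have h: "\<And>a. x$src a = x$tgt a" using pos by (metis less_irrefl power_eq_0_iff right_minus_eq mult_eq_0_iff UNIV_I)
  define u0 :: 'v where "u0 = undefined"
  have c: "\<And>u. x$u = x$u0" using conn_const[OF conn, of "\<lambda>i. x$i"] h by blast
  have "(\<Sum>j\<in>UNIV. x$j) = (\<Sum>j\<in>(UNIV::'v set). x$u0)" by (rule sum.cong[OF refl]) (rule c)
  then have "(\<Sum>j\<in>UNIV. x$j) = real CARD('v) * x$u0" by simp
  then have z: "x$u0 = 0" using sx n0 by simp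
  show "x = 0" unfolding vec_eq_iff by (metis c z zero_index)
qed


lemma pinv_props:
  fixes src tgt :: "'e::finite \<Rightarrow> 'v::finite"
  assumes pos: "\<And>a. w a > 0" and conn: "graph_connected src tgt"
  shows "transpose (pinv (laplacian src tgt w)) = pinv (laplacian src tgt w) \<and>
         pinv (laplacian src tgt w) *v onev = 0"
proof -
  let ?L = "laplacian src tgt w"
  define K where "K = ?L + Pm"
  have "\<forall>x. K *v x = 0 \<longrightarrow> x = 0" unfolding K_def by (intro allI impI) (rule K_ker[where w=w, OF pos conn])
  then obtain M where MK: "M ** K = mat 1" using matrix_left_invertible_ker by blast
  then have KM: "K ** M = mat 1" using matrix_left_right_inverse by blast
  have KP: "K ** Pm = Pm" unfolding K_def by (simp add: madd_r lap_Pm Pm_Pm)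
  have PK: "Pm ** K = Pm" unfolding K_def by (simp add: matrix_add_ldistrib Pm_lap Pm_Pm)
  have MP: "M ** Pm = Pm" by (metis KP MK matrix_mul_assoc matrix_mul_lid)
  have PM: "Pm ** M = Pm" by (metis PK KM matrix_mul_assoc matrix_mul_rid)
  have Ldef: "?L = K - Pm" unfolding K_def by simp
  define X where "X = M - Pm"
  have LX: "?L ** X = mat 1 - Pm" unfolding X_def Ldef by (simp add: msub_l msub_r KM KP PM Pm_Pm)
  have XL: "X ** ?L = mat 1 - Pm" unfolding X_def Ldef by (simp add: msub_l msub_r MK MP PK Pm_Pm)
  have tI: "transpose (mat 1 - Pm) = (mat 1 - Pm :: real^'v^'v)" by (simp add: transpose_sub Pm_sym)
  have c1: "?L ** X ** ?L = ?L" unfolding LX by (simp add: msub_r Pm_lap)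
  have c2: "X ** ?L ** X = X" unfolding XL by (simp add: msub_r X_def msub_l PM Pm_Pm)
  have pe: "pinv ?L = X" by (rule pinv_eq[OF c1 c2]) (simp_all add: LX XL tI)
  have "transpose (?L + Pm) = transpose ?L + transpose Pm" by (simp add: transpose_def vec_eq_iff)
  then have Ks: "transpose K = K" unfolding K_def by (simp only: lap_sym Pm_sym)
  have "transpose M ** K = mat 1" by (metis Ks KM matrix_transpose_mul transpose_mat)
  then have Ms: "transpose M = M" by (metis KM matrix_mul_assoc matrix_mul_lid matrix_mul_rid)
  have K1: "K *v onev = onev" unfolding K_def
    by (simp only: matrix_vector_mult_add_rdistrib lap_one Pm_one) simp
  have M1: "M *v onev = onev" by (metis K1 MK matrix_vector_mul_assoc matrix_vector_mul_lid)
  have X1: "X *v onev = 0" unfolding X_def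
    by (simp only: matrix_vector_mult_diff_rdistrib M1 Pm_one) simp
  show ?thesis using pe X1 Ms Pm_sym by (simp add: X_def transpose_sub)
qed


lemma pair_sum:
  fixes y :: "'v::{finite,linorder} \<Rightarrow> real"
  shows "(\<Sum>(s, t) \<in> {(s, t). s < t}. (y s - y t)^2) =
         real CARD('v) * (\<Sum>s\<in>UNIV. (y s)^2) - (\<Sum>s\<in>UNIV. y s)^2"
proof -
  define g where "g = (\<lambda>(s::'v, t::'v). (y s - y t)^2)"
  define A where "A = {(s::'v, t::'v). s < t}"
  define B where "B = {(s::'v, t::'v). t < s}"
  define C where "C = {(s::'v, t::'v). s = t}"
  have U: "(UNIV :: ('v \<times> 'v) set) = A \<union> B \<union> C" unfolding A_def B_def C_def by auto
  have dAB: "A \<inter> B = {}" unfolding A_def B_def by auto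
  have dC: "(A \<union> B) \<inter> C = {}" unfolding A_def B_def C_def by auto
  have sC: "sum g C = 0" unfolding C_def g_def by (rule sum.neutral) auto
  have sB: "sum g B = sum g A"
  proof -
    have "B = prod.swap ` A" unfolding A_def B_def by auto
    moreover have "inj_on prod.swap A" by (auto simp: inj_on_def)
    ultimately have "sum g B = sum (g \<circ> prod.swap) A" by (simp add: sum.reindex)
    also have "\<dots> = sum g A" unfolding g_def by (rule sum.cong) (auto simp: power2_commute)
    finally show ?thesis .
  qed
  have "sum g UNIV = 2 * sum g A"
    unfolding U by (simp add: sum.union_disjoint dAB dC sC sB)
  moreover have "sum g UNIV = (\<Sum>s\<in>UNIV. \<Sum>t\<in>UNIV. (y s - y t)^2)"
    unfolding g_def UNIV_Times_UNIV[symmetric] sum.cartesian_product by simp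
  moreover have "(\<Sum>s\<in>UNIV. \<Sum>t\<in>UNIV. (y s - y t)^2) =
       2 * (real CARD('v) * (\<Sum>s\<in>UNIV. (y s)^2) - (\<Sum>s\<in>UNIV. y s)^2)"
    by (simp add: power2_diff sum.distrib sum_subtractf sum_distrib_left sum_distrib_right
        power2_eq_square algebra_simps)
  ultimately show ?thesis unfolding A_def g_def by simp
qed

lemma if01_r: "(y::real) * (if P then 1 else 0) = (if P then y else 0)" by simp
lemma if01_l: "(if P then 1 else 0) * (y::real) = (if P then y else 0)" by simp
lemma if0_l: "(if P then (c::real) else 0) * y = (if P then c * y else 0)" by simp

lemma mv_indic: "((Q::real^'v::finite^'m) *v (indic c - indic d)) $ i = Q$i$c - Q$i$d"
  unfolding matrix_vector_mult_def indic_def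
  by (simp only: vec_lambda_beta vector_minus_component right_diff_distrib sum_subtractf if01_r)
    (simp add: sum.delta')

lemma dot_indic: "(indic a - indic b) \<bullet> (z::real^'v::finite) = z$a - z$b"
  unfolding inner_vec_def indic_def inner_real_def
  by (simp only: vec_lambda_beta vector_minus_component left_diff_distrib sum_subtractf if01_l)
    (simp add: sum.delta)

lemma diag_mv: "(diagm w *v z) $ e = w e * z $ e"
  unfolding matrix_vector_mult_def diagm_def
  by (simp only: vec_lambda_beta if0_l) (simp add: sum.delta)

lemma bdT_mv: "(transpose (boundary src tgt) *v z) $ e = z $ src e - z $ tgt e"
  unfolding matrix_vector_mult_def transpose_def boundary_def
  by (simp only: vec_lambda_beta left_diff_distrib sum_subtractf if01_l) (simp add: sum.delta)

theorem theorem4p1: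
  fixes src tgt :: "'e::finite \<Rightarrow> 'v::{finite,linorder}"
    and w :: "'e \<Rightarrow> real" and e :: 'e
  assumes no_loops: "\<And>a. src a \<noteq> tgt a"
    and simple: "\<And>a b. {src a, tgt a} = {src b, tgt b} \<Longrightarrow> a = b"
    and pos: "\<And>a. w a > 0"
    and conn: "graph_connected src tgt"
  shows "real CARD('v) * w e * (biharmonic src tgt w (src e) (tgt e))\<^sup>2 =
         (\<Sum>(s, t) \<in> {(s, t). s < t}. (elec_flow src tgt w s t $ e)\<^sup>2 / w e)"
proof -
  define X where "X = pinv (laplacian src tgt w)"
  have Xs: "transpose X = X" and X1: "X *v onev = 0"
    using pinv_props[OF pos conn] unfolding X_def by auto
  have Xsym: "\<And>i j. X$i$j = X$j$i" using Xs by (metis transpose_def vec_lambda_beta)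
  define y where "y k = X$src e$k - X$tgt e$k" for k
  have rs: "\<And>i. (\<Sum>k\<in>UNIV. X$i$k) = 0"
    using X1 by (simp add: matrix_vector_mult_def onev_def vec_eq_iff)
  have sy: "(\<Sum>k\<in>UNIV. y k) = 0" by (simp add: y_def sum_subtractf rs)
  have fl: "\<And>s t. elec_flow src tgt w s t $ e = w e * (y s - y t)"
    unfolding elec_flow_def X_def[symmetric] matrix_vector_mul_assoc[symmetric]
    by (simp only: diag_mv bdT_mv mv_indic) (simp add: y_def algebra_simps)
  have bq: "(indic (src e) - indic (tgt e)) \<bullet> ((X ** X) *v (indic (src e) - indic (tgt e))) = (\<Sum>k\<in>UNIV. (y k)^2)"
  proof -
    have q: "(X ** X)$a$c = (\<Sum>k\<in>UNIV. X$a$k * X$c$k)" for a c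
    proof -
      have "(X ** X)$a$c = (\<Sum>k\<in>UNIV. X$a$k * X$k$c)" by (simp add: matrix_matrix_mult_def)
      also have "\<dots> = (\<Sum>k\<in>UNIV. X$a$k * X$c$k)" by (rule sum.cong[OF refl]) (metis Xsym)
      finally show ?thesis .
    qed
    have "(indic (src e) - indic (tgt e)) \<bullet> ((X ** X) *v (indic (src e) - indic (tgt e)))
      = ((X ** X)$src e$src e - (X ** X)$src e$tgt e) - ((X ** X)$tgt e$src e - (X ** X)$tgt e$tgt e)"
      by (simp only: dot_indic mv_indic)
    also have "\<dots> = (\<Sum>k\<in>UNIV. (X$src e$k * X$src e$k - X$src e$k * X$tgt e$k)
                     - (X$tgt e$k * X$src e$k - X$tgt e$k * X$tgt e$k))"
      by (simp only: q sum_subtractf)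
    also have "\<dots> = (\<Sum>k\<in>UNIV. (y k)^2)"
      by (rule sum.cong[OF refl]) (simp add: y_def power2_eq_square algebra_simps)
    finally show ?thesis .
  qed
  have nn: "(\<Sum>k\<in>UNIV. (y k)^2) \<ge> 0" by (simp add: sum_nonneg)
  have bh: "(biharmonic src tgt w (src e) (tgt e))\<^sup>2 = (\<Sum>k\<in>UNIV. (y k)^2)"
    unfolding biharmonic_def X_def[symmetric] bq using nn by simp
  have we: "w e > 0" using pos by simp
  have "(\<Sum>(s, t) \<in> {(s, t). s < t}. (elec_flow src tgt w s t $ e)\<^sup>2 / w e)
      = (\<Sum>(s, t) \<in> {(s, t). s < t}. w e * (y s - y t)^2)"
    using we by (intro sum.cong) (auto simp: fl power_mult_distrib power2_eq_square)
  also have "\<dots> = w e * (\<Sum>(s, t) \<in> {(s, t). s < t}. (y s - y t)^2)"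
    by (simp add: sum_distrib_left case_prod_unfold)
  also have "\<dots> = w e * (real CARD('v) * (\<Sum>s\<in>UNIV. (y s)^2))"
    by (simp add: pair_sum sy)
  finally show ?thesis by (simp add: bh)
qed

end
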